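(* Let $\ell\ge2$ and $V=(\mathbb{F}_2)^{2^\ell}$. If $G<\mathrm{GL}(V)$ is a subgroup isomorphic to $\mathrm{Alt}((\mathbb{F}_2)^{128})$, then $\ell\ge67$.
   Context: $\mathrm{Alt}((\mathbb{F}_2)^{128})$ denotes the alternating group on the set $(\mathbb{F}_2)^{128}$ (of cardinality $2^{128}$). *)

theory Defs
  imports "HOL-Algebra.Sym_Groups"
begin

text \<open>The vector space (F_2)^n, modelled as bit-vectors nat => bool vanishing from index n on.
  Addition is pointwise XOR (the only nontrivial F_2 scalar is 1, so F_2-linear = additive).\<close>
definition F2vec :: "nat \<Rightarrow> (nat \<Rightarrow> bool) set" where
  "F2vec n = {v. \<forall>i\<ge>n. \<not> v i}"

definition vadd :: "(nat \<Rightarrow> bool) \<Rightarrow> (nat \<Rightarrow> bool) \<Rightarrow> (nat \<Rightarrow> bool)" where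
  "vadd v w = (\<lambda>i. v i \<noteq> w i)"

definition GL2_set :: "nat \<Rightarrow> ((nat \<Rightarrow> bool) \<Rightarrow> (nat \<Rightarrow> bool)) set" where
  "GL2_set n = {f. bij_betw f (F2vec n) (F2vec n)
                  \<and> (\<forall>x\<in>F2vec n. \<forall>y\<in>F2vec n. f (vadd x y) = vadd (f x) (f y))
                  \<and> (\<forall>x. x \<notin> F2vec n \<longrightarrow> f x = x)}"

definition GL2 :: "nat \<Rightarrow> ((nat \<Rightarrow> bool) \<Rightarrow> (nat \<Rightarrow> bool)) monoid" where
  "GL2 n = \<lparr>carrier = GL2_set n, mult = (\<circ>), one = id\<rparr>"

definition Alt :: "'a set \<Rightarrow> ('a \<Rightarrow> 'a) monoid" where
  "Alt X = \<lparr> carrier = {p. p permutes X \<and> evenperm p}, mult = (\<lambda>f g. f \<circ> g), one = id \<rparr>"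

end

theory Submission
  imports Defs "HOL-Library.FuncSet"
begin

lemma card_F2vec: "card (F2vec n) = 2 ^ n" "finite (F2vec n)"
proof -
  have eq: "F2vec n = (\<lambda>S i. i \<in> S) ` Pow {..<n}"
  proof
    show "F2vec n \<subseteq> (\<lambda>S i. i \<in> S) ` Pow {..<n}"
    proof
      fix v assume "v \<in> F2vec n"
      then have "v = (\<lambda>i. i \<in> {i. v i})" "{i. v i} \<in> Pow {..<n}"
        by (auto simp: F2vec_def not_less[symmetric])
      then show "v \<in> (\<lambda>S i. i \<in> S) ` Pow {..<n}" by blast
    qed
  qed (auto simp: F2vec_def)
  have inj: "inj_on (\<lambda>S i. i \<in> S) (Pow {..<n})"
    by (auto simp: inj_on_def fun_eq_iff)
  show "card (F2vec n) = 2 ^ n" unfolding eq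
    by (simp add: card_image[OF inj] card_Pow)
  show "finite (F2vec n)" unfolding eq by simp
qed

definition ee :: "nat \<Rightarrow> nat \<Rightarrow> bool" where "ee k = (\<lambda>i. i = k)"

lemma GL_zero:
  assumes "f \<in> GL2_set d" shows "f (\<lambda>i. False) = (\<lambda>i. False)"
proof -
  have z: "(\<lambda>i. False) \<in> F2vec d" by (simp add: F2vec_def)
  have "vadd (\<lambda>i. False) (\<lambda>i. False) = (\<lambda>i. False)" by (simp add: vadd_def)
  moreover have "f (vadd (\<lambda>i. False) (\<lambda>i. False)) = vadd (f (\<lambda>i. False)) (f (\<lambda>i. False))"
    using assms z by (simp add: GL2_set_def)
  ultimately show ?thesis by (simp add: vadd_def fun_eq_iff)
qed

lemma GL_det:
  assumes f: "f \<in> GL2_set d" and g: "g \<in> GL2_set d"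
    and agree: "\<And>i. i < d \<Longrightarrow> f (ee i) = g (ee i)"
  shows "f = g"
proof
  fix x
  show "f x = g x"
  proof (cases "x \<in> F2vec d")
    case False then show ?thesis using f g by (simp add: GL2_set_def)
  next
    case True
    have "\<forall>x. (\<forall>i\<ge>n. \<not> x i) \<and> n \<le> d \<longrightarrow> f x = g x" for n
    proof (induction n)
      case 0
      then show ?case using GL_zero[OF f] GL_zero[OF g]
        by (auto simp: fun_eq_iff)
    next
      case (Suc n)
      show ?case
      proof (intro allI impI)
        fix x assume h: "(\<forall>i\<ge>Suc n. \<not> x i) \<and> Suc n \<le> d"
        show "f x = g x"
        proof (cases "x n")
          case False
          then have "\<forall>i\<ge>n. \<not> x i" using h by (metis le_antisym not_less_eq_eq)
          then show ?thesis using Suc.IH h by simp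
        next
          case True
          define x' where "x' = x(n := False)"
          have x'n: "\<forall>i\<ge>n. \<not> x' i" using h by (simp add: x'_def) (metis le_antisym not_less_eq_eq)?
          have xe: "x = vadd x' (ee n)" using True by (auto simp: x'_def vadd_def ee_def fun_eq_iff)
          have in1: "x' \<in> F2vec d" using x'n h by (auto simp: F2vec_def)
          have in2: "ee n \<in> F2vec d" using h by (auto simp: F2vec_def ee_def)
          have "f x = vadd (f x') (f (ee n))" using f in1 in2 xe by (simp add: GL2_set_def)
          also have "\<dots> = vadd (g x') (g (ee n))"
            using Suc.IH x'n h agree[of n] by simp
          also have "\<dots> = g x" using g in1 in2 xe by (simp add: GL2_set_def)
          finally show ?thesis .
        qed
      qed
    qed
    then show ?thesis using True by (auto simp: F2vec_def)
  qed
qed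

lemma card_sub_GL:
  assumes "G \<subseteq> GL2_set d" shows "card G \<le> 2 ^ (d * d)"
proof -
  define \<phi> where "\<phi> f = (\<lambda>i\<in>{..<d}. f (ee i))" for f :: "(nat \<Rightarrow> bool) \<Rightarrow> (nat \<Rightarrow> bool)"
  have inj: "inj_on \<phi> G"
  proof (rule inj_onI)
    fix f g assume "f \<in> G" "g \<in> G" "\<phi> f = \<phi> g"
    then show "f = g" using assms
    proof (intro GL_det[of f d g])
      fix i assume "i < d"
      then show "f (ee i) = g (ee i)" using \<open>\<phi> f = \<phi> g\<close>
        unfolding \<phi>_def by (metis lessThan_iff restrict_apply')
    qed (use \<open>f \<in> G\<close> \<open>g \<in> G\<close> assms in auto)
  qed
  have sub: "\<phi> ` G \<subseteq> (\<Pi>\<^sub>E i\<in>{..<d}. F2vec d)"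
  proof
    fix y assume "y \<in> \<phi> ` G"
    then obtain f where "f \<in> G" "y = \<phi> f" by auto
    moreover have "ee i \<in> F2vec d" if "i < d" for i using that by (auto simp: F2vec_def ee_def)
    moreover have "f ` F2vec d = F2vec d" using \<open>f \<in> G\<close> assms unfolding GL2_set_def bij_betw_def by blast
    ultimately show "y \<in> (\<Pi>\<^sub>E i\<in>{..<d}. F2vec d)"
      by (auto simp: \<phi>_def)
  qed
  have "card G \<le> card (\<Pi>\<^sub>E i\<in>{..<d}. F2vec d)"
    by (rule card_inj_on_le[OF inj sub]) (simp add: finite_PiE card_F2vec)
  also have "\<dots> = (2 ^ d) ^ d" by (simp add: card_PiE card_F2vec)
  also have "\<dots> = 2 ^ (d * d)" by (simp add: power_mult)
  finally show ?thesis .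
qed

lemma fact_lower: "k ^ (n - k) \<le> fact n"
proof (induction n)
  case 0 then show ?case by simp
next
  case (Suc n)
  show ?case
  proof (cases "Suc n \<le> k")
    case True then show ?thesis by (simp del: fact_Suc)
  next
    case False
    then have "Suc n - k = Suc (n - k)" by simp
    then have "k ^ (Suc n - k) = k * k ^ (n - k)" by simp
    also have "\<dots> \<le> Suc n * fact n" using False Suc.IH by (intro mult_mono) auto
    finally show ?thesis by (simp add: fact_Suc)
  qed
qed

lemma card_Alt:
  assumes "finite X" "a \<in> X" "b \<in> X" "a \<noteq> b"
  shows "fact (card X) \<le> 2 * card (carrier (Alt X))"
proof -
  let ?E = "carrier (Alt X)"
  have E: "?E = {p. p permutes X \<and> evenperm p}" by (simp add: Alt_def)
  have fin: "finite {p. p permutes X}" using assms(1) by (rule finite_permutations)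
  have "{p. p permutes X} \<subseteq> ?E \<union> (\<lambda>p. p \<circ> transpose a b) ` ?E"
  proof
    fix p assume p: "p \<in> {p. p permutes X}"
    have t: "transpose a b permutes X" using assms by (simp add: permutes_swap_id)
    have pp: "permutation p" "permutation (transpose a b)"
      using p t assms(1) by (auto intro: permutes_imp_permutation)
    show "p \<in> ?E \<union> (\<lambda>p. p \<circ> transpose a b) ` ?E"
    proof (cases "evenperm p")
      case True then show ?thesis using p E by auto
    next
      case False
      have "evenperm (p \<circ> transpose a b)" using evenperm_comp[OF pp] False evenperm_swap[of a b] assms(4) by simp
      moreover have "p \<circ> transpose a b permutes X" using p t by (simp add: permutes_compose)
      moreover have "p = (p \<circ> transpose a b) \<circ> transpose a b" by (simp add: fun_eq_iff)
      ultimately show ?thesis using E by blast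
    qed
  qed
  then have "card {p. p permutes X} \<le> card (?E \<union> (\<lambda>p. p \<circ> transpose a b) ` ?E)"
    by (rule card_mono[rotated]) (use fin E in auto)
  also have "\<dots> \<le> card ?E + card ((\<lambda>p. p \<circ> transpose a b) ` ?E)" by (rule card_Un_le)
  also have "\<dots> \<le> 2 * card ?E" using card_image_le[of ?E] fin E
    by (simp add: card_image_le)
  finally show ?thesis using card_permutations[OF refl assms(1)] by simp
qed

lemma final_num:
  fixes c K M k :: nat
  assumes f: "fact (2 * K) \<le> 2 * c" and c: "c \<le> 2 ^ M" and lt: "Suc M < k * K" and K: "K = 2 ^ k"
  shows False
proof -
  have "K ^ K \<le> fact (2 * K)" using fact_lower[of K "2*K"] by simp
  moreover have "K ^ K = 2 ^ (k * K)" using K by (simp add: power_mult)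
  moreover have "2 * c \<le> 2 ^ Suc M" using c by simp
  moreover have "(2::nat) ^ Suc M < 2 ^ (k * K)" using lt by (rule power_strict_increasing) simp
  ultimately show False using f by linarith
qed

theorem mainTheorem12:
  fixes l :: nat and G :: "((nat \<Rightarrow> bool) \<Rightarrow> (nat \<Rightarrow> bool)) set"
  assumes "l \<ge> 2"
    and "subgroup G (GL2 (2 ^ l))"
    and "(GL2 (2 ^ l))\<lparr>carrier := G\<rparr> \<cong> Alt (F2vec 128)"
  shows "l \<ge> 67"
proof (rule ccontr)
  assume "\<not> l \<ge> 67"
  then have l: "l \<le> 66" by simp
  define d :: nat where "d = 2 ^ l"
  have sub: "G \<subseteq> GL2_set d" using subgroup.subset[OF assms(2)] by (simp add: GL2_def d_def)
  have cG: "card G \<le> 2 ^ (d * d)" by (rule card_sub_GL[OF sub])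
  have "d * d = 2 ^ (2 * l)" by (simp add: d_def power_add[symmetric] mult_2)
  also have "\<dots> \<le> 2 ^ 132" using l by (intro power_increasing) auto
  finally have dd: "d * d \<le> 2 ^ 132" .
  define M :: nat where "M = 2 ^ 132"
  have cM: "card G \<le> 2 ^ M"
    using cG dd power_increasing[of "d*d" M "2::nat"] unfolding M_def by linarith
  obtain h where "bij_betw h G (carrier (Alt (F2vec 128)))"
    using assms(3) by (auto simp: is_iso_def iso_def)
  then have cGA: "card G = card (carrier (Alt (F2vec 128)))" by (simp add: bij_betw_same_card)
  have ab: "(\<lambda>i. False) \<in> F2vec 128" "(\<lambda>i. i = 0) \<in> F2vec 128" "(\<lambda>i. False) \<noteq> (\<lambda>i::nat. i = 0)"
    by (auto simp: F2vec_def fun_eq_iff)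
  define K :: nat where "K = 2 ^ 127"
  have cX: "card (F2vec 128) = 2 * K" unfolding K_def by (simp add: card_F2vec)
  have f: "fact (2 * K) \<le> 2 * card G"
    using card_Alt[OF card_F2vec(2) ab] unfolding cGA cX .
  have lt: "Suc M < 127 * K" unfolding M_def K_def by simp
  show False by (rule final_num[OF f cM lt K_def])
qed

end
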